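(* Let $G$ be a connected graph and $U\subseteq V(G)$ such that every $U$-rooted minor of $G$ with countable branch sets has countable colouring number. Then every branch of a slim $U$-rooted normal semi-partition tree $(T,\mathcal V)$ of $G$ is at most countable; in particular, all bags $V_t$ are countable.
   Context: Minors are given by disjoint connected branch sets; a minor is $U$-rooted if every branch set meets $U$. Countable colouring number: a well-order of the vertices in which each vertex is preceded by only finitely many neighbours. An order tree is a poset with unique minimal element in which every down-closure $\lceil t\rceil$ is well-ordered; a branch is a maximal chain; $\mathring{\lceil t\rceil}=\lceil t\rceil\setminus\{t\}$; height of $t$ = order type of $\mathring{\lceil t\rceil}$. A $T$-graph is a graph on $T$ whose edges have comparable endvertices and in which the lower neighbours of each $t$ are cofinal in $\mathring{\lceil t\rceil}$. $(T,(V_t)_{t\in T})$ with nonempty $V_t\subseteq V(G)$ is a normal semi-partition tree if the $V_t$ are pairwise disjoint, each $G[V_t]$ connected, contracting each $V_t$ in $G[\bigcup V_t]$ gives a $T$-graph, and for every path in $G$ with at least one edge, endvertices in $V_t$, $V_{t'}$, inner vertices outside $\bigcup V_s$ and no edges inside $G[\bigcup V_s]$, $t,t'$ are comparable. Slim: $|V_t|\le|\mathrm{height}(t)|+\aleph_0$; $U$-rooted: each $V_t$ meets $U$. *)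

theory Defs
  imports Main "HOL-Library.Countable_Set"
begin

definition graph :: "'v set \<Rightarrow> ('v \<Rightarrow> 'v \<Rightarrow> bool) \<Rightarrow> bool" where
  "graph V E \<longleftrightarrow> (\<forall>x y. E x y \<longrightarrow> x \<in> V \<and> y \<in> V \<and> x \<noteq> y \<and> E y x)"

definition walk :: "('v \<Rightarrow> 'v \<Rightarrow> bool) \<Rightarrow> 'v list \<Rightarrow> bool" where
  "walk E xs \<longleftrightarrow> xs \<noteq> [] \<and> (\<forall>i. Suc i < length xs \<longrightarrow> E (xs ! i) (xs ! Suc i))"

definition gpath :: "('v \<Rightarrow> 'v \<Rightarrow> bool) \<Rightarrow> 'v list \<Rightarrow> bool" where
  "gpath E xs \<longleftrightarrow> walk E xs \<and> distinct xs"

definition connected_set :: "('v \<Rightarrow> 'v \<Rightarrow> bool) \<Rightarrow> 'v set \<Rightarrow> bool" where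
  "connected_set E S \<longleftrightarrow> S \<noteq> {} \<and>
     (\<forall>x\<in>S. \<forall>y\<in>S. \<exists>xs. walk E xs \<and> hd xs = x \<and> last xs = y \<and> set xs \<subseteq> S)"

definition connected_graph :: "'v set \<Rightarrow> ('v \<Rightarrow> 'v \<Rightarrow> bool) \<Rightarrow> bool" where
  "connected_graph V E \<longleftrightarrow> graph V E \<and> connected_set E V"

text \<open>The minor's vertices are
  (w.l.o.g.) its branch sets themselves: B is a set of pairwise disjoint, nonempty,
  connected, countable subsets of V, each meeting U, and F is a graph on B such that
  adjacent branch sets are joined by an edge of G.\<close>
definition rooted_countable_minor ::
  "'v set \<Rightarrow> ('v \<Rightarrow> 'v \<Rightarrow> bool) \<Rightarrow> 'v set \<Rightarrow> 'v set set \<Rightarrow> ('v set \<Rightarrow> 'v set \<Rightarrow> bool) \<Rightarrow> bool" where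
  "rooted_countable_minor V E U B F \<longleftrightarrow>
     graph B F \<and>
     (\<forall>X\<in>B. X \<subseteq> V \<and> connected_set E X \<and> countable X \<and> X \<inter> U \<noteq> {}) \<and>
     (\<forall>X\<in>B. \<forall>Y\<in>B. X \<noteq> Y \<longrightarrow> X \<inter> Y = {}) \<and>
     (\<forall>X Y. F X Y \<longrightarrow> (\<exists>x\<in>X. \<exists>y\<in>Y. E x y))"

definition countable_colouring_number :: "'a set \<Rightarrow> ('a \<Rightarrow> 'a \<Rightarrow> bool) \<Rightarrow> bool" where
  "countable_colouring_number V E \<longleftrightarrow>
     (\<exists>r. well_order_on V r \<and>
          (\<forall>x\<in>V. finite {y. (y, x) \<in> r \<and> y \<noteq> x \<and> E x y}))"

definition down :: "'t set \<Rightarrow> ('t \<Rightarrow> 't \<Rightarrow> bool) \<Rightarrow> 't \<Rightarrow> 't set" where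
  "down T le t = {s\<in>T. le s t}"

definition sdown :: "'t set \<Rightarrow> ('t \<Rightarrow> 't \<Rightarrow> bool) \<Rightarrow> 't \<Rightarrow> 't set" where
  "sdown T le t = {s\<in>T. le s t \<and> s \<noteq> t}"

definition order_tree :: "'t set \<Rightarrow> ('t \<Rightarrow> 't \<Rightarrow> bool) \<Rightarrow> bool" where
  "order_tree T le \<longleftrightarrow>
     (\<forall>x\<in>T. le x x) \<and>
     (\<forall>x\<in>T. \<forall>y\<in>T. le x y \<and> le y x \<longrightarrow> x = y) \<and>
     (\<forall>x\<in>T. \<forall>y\<in>T. \<forall>z\<in>T. le x y \<and> le y z \<longrightarrow> le x z) \<and>
     (\<exists>!r. r \<in> T \<and> (\<forall>s\<in>T. le s r \<longrightarrow> s = r)) \<and>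
     (\<forall>t\<in>T. (\<forall>x\<in>down T le t. \<forall>y\<in>down T le t. le x y \<or> le y x) \<and>
             (\<forall>S. S \<subseteq> down T le t \<and> S \<noteq> {} \<longrightarrow> (\<exists>m\<in>S. \<forall>s\<in>S. le m s)))"

definition chain_in :: "'t set \<Rightarrow> ('t \<Rightarrow> 't \<Rightarrow> bool) \<Rightarrow> 't set \<Rightarrow> bool" where
  "chain_in T le C \<longleftrightarrow> C \<subseteq> T \<and> (\<forall>x\<in>C. \<forall>y\<in>C. le x y \<or> le y x)"

definition branch :: "'t set \<Rightarrow> ('t \<Rightarrow> 't \<Rightarrow> bool) \<Rightarrow> 't set \<Rightarrow> bool" where
  "branch T le C \<longleftrightarrow> chain_in T le C \<and> (\<forall>D. chain_in T le D \<and> C \<subseteq> D \<longrightarrow> D = C)"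

definition T_graph :: "'t set \<Rightarrow> ('t \<Rightarrow> 't \<Rightarrow> bool) \<Rightarrow> ('t \<Rightarrow> 't \<Rightarrow> bool) \<Rightarrow> bool" where
  "T_graph T le H \<longleftrightarrow> graph T H \<and>
     (\<forall>s t. H s t \<longrightarrow> le s t \<or> le t s) \<and>
     (\<forall>t\<in>T. \<forall>s\<in>sdown T le t. \<exists>s'\<in>sdown T le t. le s s' \<and> H s' t)"

definition normal_semi_partition_tree ::
  "'v set \<Rightarrow> ('v \<Rightarrow> 'v \<Rightarrow> bool) \<Rightarrow> 't set \<Rightarrow> ('t \<Rightarrow> 't \<Rightarrow> bool) \<Rightarrow> ('t \<Rightarrow> 'v set) \<Rightarrow> bool" where
  "normal_semi_partition_tree V E T le Vt \<longleftrightarrow>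
     order_tree T le \<and>
     (\<forall>t\<in>T. Vt t \<noteq> {} \<and> Vt t \<subseteq> V) \<and>
     (\<forall>t\<in>T. \<forall>t'\<in>T. t \<noteq> t' \<longrightarrow> Vt t \<inter> Vt t' = {}) \<and>
     (\<forall>t\<in>T. connected_set E (Vt t)) \<and>
     T_graph T le (\<lambda>t t'. t \<in> T \<and> t' \<in> T \<and> t \<noteq> t' \<and> (\<exists>x\<in>Vt t. \<exists>y\<in>Vt t'. E x y)) \<and>
     (\<forall>t\<in>T. \<forall>t'\<in>T. \<forall>xs.
        gpath E xs \<and> length xs \<ge> 2 \<and> hd xs \<in> Vt t \<and> last xs \<in> Vt t' \<and>
        set (butlast (tl xs)) \<inter> (\<Union>s\<in>T. Vt s) = {} \<and>
        (\<forall>i. Suc i < length xs \<longrightarrow>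
             \<not> (xs ! i \<in> (\<Union>s\<in>T. Vt s) \<and> xs ! Suc i \<in> (\<Union>s\<in>T. Vt s)))
        \<longrightarrow> le t t' \<or> le t' t)"

text \<open>Slim: |V_t| \<le> |height(t)| + aleph_0, where |height(t)| is the cardinality of the
  strict down-closure; the cardinal sum is realised as a disjoint union with nat.\<close>
definition slim :: "'t set \<Rightarrow> ('t \<Rightarrow> 't \<Rightarrow> bool) \<Rightarrow> ('t \<Rightarrow> 'v set) \<Rightarrow> bool" where
  "slim T le Vt \<longleftrightarrow>
     (\<forall>t\<in>T. (card_of (Vt t), card_of (sdown T le t <+> (UNIV :: nat set))) \<in> ordLeq)"

definition U_rooted_tree :: "'v set \<Rightarrow> 't set \<Rightarrow> ('t \<Rightarrow> 'v set) \<Rightarrow> bool" where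
  "U_rooted_tree U T Vt \<longleftrightarrow> (\<forall>t\<in>T. Vt t \<inter> U \<noteq> {})"

end

theory Submission
  imports Defs
begin

lemma finite_in_mono_union:
  assumes "finite N" "N \<subseteq> (\<Union>n. A n)" "\<And>n. A n \<subseteq> A (Suc n)"
  shows "\<exists>k. N \<subseteq> A k"
  using assms(1,2)
proof (induction N rule: finite_induct)
  case empty then show ?case by auto
next
  case (insert x F)
  then obtain k1 where k1: "F \<subseteq> A k1" by auto
  from insert obtain k2 where k2: "x \<in> A k2" by auto
  have mono: "A i \<subseteq> A j" if "i \<le> j" for i j
    using lift_Suc_mono_le[of A, OF assms(3) that] .
  have "insert x F \<subseteq> A (max k1 k2)"
    using k1 k2 mono[of k1 "max k1 k2"] mono[of k2 "max k1 k2"] by auto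
  then show ?case by blast
qed

lemma key:
  fixes D :: "'t set" and le :: "'t \<Rightarrow> 't \<Rightarrow> bool"
  assumes refl: "\<forall>x\<in>D. le x x"
    and antisym: "\<forall>x\<in>D. \<forall>y\<in>D. le x y \<and> le y x \<longrightarrow> x = y"
    and trans: "\<forall>x\<in>D. \<forall>y\<in>D. \<forall>z\<in>D. le x y \<and> le y z \<longrightarrow> le x z"
    and chain: "\<forall>x\<in>D. \<forall>y\<in>D. le x y \<or> le y x"
    and wf: "\<forall>S. S \<subseteq> D \<and> S \<noteq> {} \<longrightarrow> (\<exists>m\<in>S. \<forall>s\<in>S. le m s)"
    and cdown: "\<forall>t\<in>D. countable {s\<in>D. le s t}"
    and unc: "\<not> countable D"
    and cof: "\<forall>t\<in>D. \<forall>s\<in>D. le s t \<and> s \<noteq> t \<longrightarrow> (\<exists>s'\<in>D. le s s' \<and> le s' t \<and> s' \<noteq> t \<and> G s' t)"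
    and Gsym: "\<forall>s\<in>D. \<forall>t\<in>D. G s t \<longrightarrow> G t s"
    and tot: "\<forall>s\<in>D. \<forall>t\<in>D. s \<noteq> t \<longrightarrow> Q s t \<or> Q t s"
    and fin: "\<forall>t\<in>D. finite {s\<in>D. Q s t \<and> s \<noteq> t \<and> G t s}"
  shows False
proof -
  define dn where "dn t = {s\<in>D. le s t}" for t
  define Bk where "Bk t = {s\<in>D. Q s t \<and> s \<noteq> t \<and> G t s}" for t
  have bound: "\<exists>u\<in>D. \<forall>s\<in>S. le s u \<and> s \<noteq> u" if "S \<subseteq> D" "countable S" for S
  proof -
    have "countable (\<Union>s\<in>S. dn s)" using that cdown by (auto simp: dn_def)
    then obtain u where u: "u \<in> D" "u \<notin> (\<Union>s\<in>S. dn s)" using unc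
      by (metis countable_subset subsetI)
    have "le s u \<and> s \<noteq> u" if "s \<in> S" for s
      using u that \<open>S \<subseteq> D\<close> chain refl by (auto simp: dn_def)
    then show ?thesis using u by blast
  qed
  then obtain g where g: "\<And>S. S \<subseteq> D \<Longrightarrow> countable S \<Longrightarrow> g S \<in> D \<and> (\<forall>s\<in>S. le s (g S) \<and> s \<noteq> g S)"
    by metis
  define P where "P t = dn t \<union> (\<Union>s\<in>dn t. Bk s)" for t
  have PD: "P t \<subseteq> D" for t by (auto simp: P_def dn_def Bk_def)
  have Pc: "countable (P t)" if "t \<in> D" for t
  proof -
    have "countable (dn t)" using cdown that by (simp add: dn_def)
    moreover have "\<forall>s\<in>dn t. countable (Bk s)" using fin by (auto simp: Bk_def dn_def intro: countable_finite)
    ultimately show ?thesis unfolding P_def by auto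
  qed
  have "D \<noteq> {}" using unc by auto
  then obtain t0 where t0: "t0 \<in> D" by auto
  define seq where "seq = rec_nat t0 (\<lambda>_ t. g (P t))"
  have seq0: "seq 0 = t0" by (simp add: seq_def)
  have seqS: "seq (Suc n) = g (P (seq n))" for n by (simp add: seq_def)
  have seqD: "seq n \<in> D" for n
    by (induction n) (use t0 g PD Pc in \<open>auto simp: seq0 seqS\<close>)
  have step: "\<forall>s\<in>P (seq n). le s (seq (Suc n)) \<and> s \<noteq> seq (Suc n)" for n
    using g[OF PD Pc[OF seqD]] by (simp add: seqS)
  have dnP: "t \<in> D \<Longrightarrow> t \<in> P t" for t using refl by (auto simp: P_def dn_def)
  have lt: "le (seq n) (seq (Suc n)) \<and> seq n \<noteq> seq (Suc n)" for n
    using step[of n] dnP[OF seqD[of n]] by blast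
  have dnmono: "dn (seq n) \<subseteq> dn (seq (Suc n))" for n
    using lt[of n] trans seqD by (auto simp: dn_def)
  define A where "A = (\<Union>n. dn (seq n))"
  have AD: "A \<subseteq> D" by (auto simp: A_def dn_def)
  have Ac: "countable A" unfolding A_def using cdown seqD by (auto simp: dn_def)
  have "D - A \<noteq> {}" using Ac unc AD by (metis Diff_eq_empty_iff countable_subset)
  then obtain ts where ts: "ts \<in> D - A" "\<forall>s\<in>D - A. le ts s" using wf[rule_format, of "D - A"] by blast
  have Adown: "s \<in> A" if "s \<in> D" "le s a" "a \<in> A" for s a
  proof -
    from that(3) obtain n where n: "a \<in> D" "le a (seq n)" unfolding A_def dn_def by auto
    have "le s (seq n)" using trans[rule_format, of s a "seq n"] that n seqD by blast
    then show ?thesis using that(1) unfolding A_def dn_def by blast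
  qed
  have below: "le a ts \<and> a \<noteq> ts" if "a \<in> A" for a
  proof -
    have "a \<in> D" using that AD by blast
    have "ts \<in> D" "ts \<notin> A" using ts by auto
    have "\<not> le ts a" using Adown[of ts a] \<open>ts \<in> D\<close> \<open>ts \<notin> A\<close> that by blast
    then have "le a ts" using chain \<open>a \<in> D\<close> \<open>ts \<in> D\<close> by blast
    then show ?thesis using \<open>ts \<notin> A\<close> that by blast
  qed
  have above: "s \<in> A" if "s \<in> D" "le s ts" "s \<noteq> ts" for s
  proof (rule ccontr)
    assume "s \<notin> A"
    then have "le ts s" using ts(2) that(1) by blast
    then show False using antisym ts(1) that by blast
  qed
  define N where "N = {s\<in>D. le s ts \<and> s \<noteq> ts \<and> G s ts}"
  have NA: "N \<subseteq> A" using above by (auto simp: N_def)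
  have seqA: "seq n \<in> A" for n using seqD refl by (auto simp: A_def dn_def)
  have infN: "infinite N"
  proof
    assume "finite N"
    then obtain k where k: "N \<subseteq> dn (seq k)"
      using finite_in_mono_union[of N "\<lambda>n. dn (seq n)"] NA dnmono by (auto simp: A_def)
    obtain s' where s': "s' \<in> D" "le (seq (Suc k)) s'" "le s' ts" "s' \<noteq> ts" "G s' ts"
      using cof ts below[OF seqA[of "Suc k"]] seqD by blast
    then have "s' \<in> N" by (auto simp: N_def)
    then have "le s' (seq k)" using k by (auto simp: dn_def)
    then have "le (seq (Suc k)) (seq k)" using s' trans seqD by blast
    then show False using lt[of k] antisym seqD by blast
  qed
  have "finite (Bk ts)" using fin ts by (auto simp: Bk_def)
  then have "N - Bk ts \<noteq> {}" using infN by (metis Diff_eq_empty_iff finite_subset)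
  then obtain s where s: "s \<in> N" "s \<notin> Bk ts" by auto
  have sD: "s \<in> D" "s \<noteq> ts" "G s ts" using s by (auto simp: N_def)
  have "G ts s" using Gsym sD ts by auto
  then have "\<not> Q s ts" using s sD by (auto simp: Bk_def)
  then have "Q ts s" using tot sD ts by blast
  then have tsB: "ts \<in> Bk s" using sD ts by (auto simp: Bk_def)
  from s NA obtain n where "s \<in> dn (seq n)" by (auto simp: A_def)
  then have "ts \<in> P (seq n)" using tsB by (auto simp: P_def)
  then have "le ts (seq (Suc n))" using step by blast
  then have "ts \<in> A" using Adown[OF _ _ seqA] ts by blast
  then show False using ts by blast
qed

lemma countable_from_slim:
  assumes "(card_of X, card_of (S <+> (UNIV :: nat set))) \<in> ordLeq" "countable S"
  shows "countable X"
proof -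
  obtain f where f: "inj_on f X" "f ` X \<subseteq> S <+> (UNIV :: nat set)"
    using card_of_ordLeq[of X "S <+> (UNIV :: nat set)", THEN iffD2, OF assms(1)] by blast
  have "countable (S <+> (UNIV :: nat set))" using assms(2) by simp
  then have "countable (f ` X)" using f(2) countable_subset by blast
  then show ?thesis using f(1) countable_image_inj_on by blast
qed

lemma chain_countable:
  fixes V :: "'v set" and E :: "'v \<Rightarrow> 'v \<Rightarrow> bool" and U :: "'v set"
    and T :: "'t set" and le :: "'t \<Rightarrow> 't \<Rightarrow> bool" and Vt :: "'t \<Rightarrow> 'v set"
  assumes conn: "connected_graph V E"
    and minor: "\<forall>B F. rooted_countable_minor V E U B F \<longrightarrow> countable_colouring_number B F"
    and nspt: "normal_semi_partition_tree V E T le Vt"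
    and slim: "slim T le Vt"
    and rooted: "U_rooted_tree U T Vt"
    and CT: "C \<subseteq> T"
    and Cchain: "\<forall>x\<in>C. \<forall>y\<in>C. le x y \<or> le y x"
    and Cdown: "\<forall>x\<in>C. \<forall>s\<in>T. le s x \<longrightarrow> s \<in> C"
  shows "countable C"
proof (rule ccontr)
  assume uncC: "\<not> countable C"
  note nd = nspt[unfolded normal_semi_partition_tree_def]
  have ot: "order_tree T le" using nd[THEN conjunct1] .
  note od = ot[unfolded order_tree_def]
  have refl: "\<forall>x\<in>T. le x x" using od[THEN conjunct1] .
  have antisym: "\<forall>x\<in>T. \<forall>y\<in>T. le x y \<and> le y x \<longrightarrow> x = y" using od[THEN conjunct2, THEN conjunct1] .
  have trans: "\<forall>x\<in>T. \<forall>y\<in>T. \<forall>z\<in>T. le x y \<and> le y z \<longrightarrow> le x z" using od[THEN conjunct2, THEN conjunct2, THEN conjunct1] .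
  have dwf0: "\<forall>t\<in>T. (\<forall>x\<in>down T le t. \<forall>y\<in>down T le t. le x y \<or> le y x) \<and>
             (\<forall>S. S \<subseteq> down T le t \<and> S \<noteq> {} \<longrightarrow> (\<exists>m\<in>S. \<forall>s\<in>S. le m s))"
    using od[THEN conjunct2, THEN conjunct2, THEN conjunct2, THEN conjunct2] .
  have dwf: "\<forall>t\<in>T. \<forall>S. S \<subseteq> down T le t \<and> S \<noteq> {} \<longrightarrow> (\<exists>m\<in>S. \<forall>s\<in>S. le m s)"
    using dwf0 by blast
  have bags: "\<forall>t\<in>T. Vt t \<noteq> {} \<and> Vt t \<subseteq> V" using nd[THEN conjunct2, THEN conjunct1] .
  have disj: "\<forall>t\<in>T. \<forall>t'\<in>T. t \<noteq> t' \<longrightarrow> Vt t \<inter> Vt t' = {}" using nd[THEN conjunct2, THEN conjunct2, THEN conjunct1] .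
  have bconn: "\<forall>t\<in>T. connected_set E (Vt t)" using nd[THEN conjunct2, THEN conjunct2, THEN conjunct2, THEN conjunct1] .
  have tg: "T_graph T le (\<lambda>t t'. t \<in> T \<and> t' \<in> T \<and> t \<noteq> t' \<and> (\<exists>x\<in>Vt t. \<exists>y\<in>Vt t'. E x y))"
    using nd[THEN conjunct2, THEN conjunct2, THEN conjunct2, THEN conjunct2, THEN conjunct1] .
  have cofT: "\<forall>t\<in>T. \<forall>s\<in>sdown T le t. \<exists>s'\<in>sdown T le t. le s s' \<and> (s' \<in> T \<and> t \<in> T \<and> s' \<noteq> t \<and> (\<exists>x\<in>Vt s'. \<exists>y\<in>Vt t. E x y))"
    using tg unfolding T_graph_def by blast
  have Esym: "\<forall>x y. E x y \<longrightarrow> E y x" using conn by (auto simp: connected_graph_def graph_def)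
  have wfC: "\<exists>m\<in>S. \<forall>s\<in>S. le m s" if SC: "S \<subseteq> C" "S \<noteq> {}" for S
  proof -
    obtain x where x: "x \<in> S" using SC(2) by blast
    have xT: "x \<in> T" using x SC CT by blast
    have "S \<inter> down T le x \<subseteq> down T le x" "S \<inter> down T le x \<noteq> {}"
      using x xT refl by (auto simp: down_def)
    then obtain m where m: "m \<in> S \<inter> down T le x" "\<forall>s\<in>S \<inter> down T le x. le m s"
      using dwf xT by blast
    have "le m s" if "s \<in> S" for s
    proof (cases "le s x")
      case True
      then show ?thesis using m that \<open>S \<subseteq> C\<close> CT by (auto simp: down_def)
    next
      case False
      then have "le x s" using Cchain x that \<open>S \<subseteq> C\<close> by blast
      moreover have "le m x" using m by (auto simp: down_def)
      moreover have "m \<in> T" "s \<in> T" using m that \<open>S \<subseteq> C\<close> CT by (auto simp: down_def)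
      ultimately show ?thesis using trans xT by blast
    qed
    then show ?thesis using m by blast
  qed
  define D where "D = {t\<in>C. countable (down T le t)}"
  have DC: "D \<subseteq> C" by (auto simp: D_def)
  have DT: "D \<subseteq> T" using DC CT by blast
  have Ddown: "s \<in> D" if "t \<in> D" "s \<in> T" "le s t" for s t
  proof -
    have "s \<in> C" using that Cdown DC by blast
    have "down T le s \<subseteq> down T le t"
      using that trans DT by (auto simp: down_def)
    then show ?thesis using that \<open>s \<in> C\<close> countable_subset by (auto simp: D_def)
  qed
  have uncD: "\<not> countable D"
  proof
    assume cD: "countable D"
    have "C - D \<noteq> {}" using cD uncC by (metis Diff_eq_empty_iff countable_subset)
    then obtain m where m: "m \<in> C - D" "\<forall>s\<in>C - D. le m s" using wfC[of "C - D"] by blast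
    have mT: "m \<in> T" using m CT by blast
    have "down T le m \<subseteq> insert m D"
    proof
      fix s assume s: "s \<in> down T le m"
      then have sT: "s \<in> T" "le s m" by (auto simp: down_def)
      then have sC: "s \<in> C" using Cdown m by blast
      show "s \<in> insert m D"
      proof (rule ccontr)
        assume "s \<notin> insert m D"
        then have "le m s" "s \<noteq> m" using m sC by auto
        then show False using antisym sT mT by blast
      qed
    qed
    then have "countable (down T le m)" using countable_subset[OF _ countable_insert[OF cD]] by blast
    then show False using m by (auto simp: D_def)
  qed
  have VtD: "countable (Vt t)" if "t \<in> D" for t
  proof -
    have tT: "t \<in> T" using that DT by blast
    have "sdown T le t \<subseteq> down T le t" by (auto simp: sdown_def down_def)
    then have "countable (sdown T le t)" using that countable_subset by (auto simp: D_def)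
    moreover have "(card_of (Vt t), card_of (sdown T le t <+> (UNIV :: nat set))) \<in> ordLeq"
      using slim tT by (simp add: slim_def)
    ultimately show ?thesis using countable_from_slim by blast
  qed
  have injD: "inj_on Vt D"
  proof (rule inj_onI)
    fix x y assume "x \<in> D" "y \<in> D" "Vt x = Vt y"
    then show "x = y" using disj bags DT by blast
  qed
  define B where "B = Vt ` D"
  define F where "F X Y = (X \<in> B \<and> Y \<in> B \<and> X \<noteq> Y \<and> (\<exists>x\<in>X. \<exists>y\<in>Y. E x y))" for X Y
  have "rooted_countable_minor V E U B F"
    unfolding rooted_countable_minor_def
  proof (intro conjI)
    show "graph B F" unfolding graph_def F_def using Esym by blast
    show "\<forall>X\<in>B. X \<subseteq> V \<and> connected_set E X \<and> countable X \<and> X \<inter> U \<noteq> {}"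
      unfolding B_def using bags bconn VtD rooted DT by (auto simp: U_rooted_tree_def)
    show "\<forall>X\<in>B. \<forall>Y\<in>B. X \<noteq> Y \<longrightarrow> X \<inter> Y = {}"
      unfolding B_def
    proof (intro ballI impI)
      fix X Y assume "X \<in> Vt ` D" "Y \<in> Vt ` D" "X \<noteq> Y"
      then obtain x y where "x \<in> D" "y \<in> D" "X = Vt x" "Y = Vt y" "x \<noteq> y" by blast
      then show "X \<inter> Y = {}" using disj DT by blast
    qed
    show "\<forall>X Y. F X Y \<longrightarrow> (\<exists>x\<in>X. \<exists>y\<in>Y. E x y)" unfolding F_def by blast
  qed
  then have "countable_colouring_number B F" using minor by blast
  then obtain r where r: "well_order_on B r" "\<forall>x\<in>B. finite {y. (y, x) \<in> r \<and> y \<noteq> x \<and> F x y}"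
    unfolding countable_colouring_number_def by blast
  have rtot: "\<forall>x\<in>B. \<forall>y\<in>B. x \<noteq> y \<longrightarrow> (x, y) \<in> r \<or> (y, x) \<in> r"
    using r(1) unfolding well_order_on_def linear_order_on_def total_on_def by blast
  define G where "G s t = (\<exists>x\<in>Vt s. \<exists>y\<in>Vt t. E x y)" for s t
  define Q where "Q s t = ((Vt s, Vt t) \<in> r)" for s t
  show False
  proof (rule key[of D le G Q])
    show "\<forall>x\<in>D. le x x" using refl DT by blast
    show "\<forall>x\<in>D. \<forall>y\<in>D. le x y \<and> le y x \<longrightarrow> x = y" using antisym DT by blast
    show "\<forall>x\<in>D. \<forall>y\<in>D. \<forall>z\<in>D. le x y \<and> le y z \<longrightarrow> le x z" using trans DT by blast
    show "\<forall>x\<in>D. \<forall>y\<in>D. le x y \<or> le y x" using Cchain DC by blast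
    show "\<forall>S. S \<subseteq> D \<and> S \<noteq> {} \<longrightarrow> (\<exists>m\<in>S. \<forall>s\<in>S. le m s)" using wfC DC by blast
    show "\<forall>t\<in>D. countable {s\<in>D. le s t}"
    proof
      fix t assume "t \<in> D"
      have "{s\<in>D. le s t} \<subseteq> down T le t" using DT by (auto simp: down_def)
      then show "countable {s\<in>D. le s t}" using \<open>t \<in> D\<close> countable_subset by (auto simp: D_def)
    qed
    show "\<not> countable D" by (rule uncD)
    show "\<forall>t\<in>D. \<forall>s\<in>D. le s t \<and> s \<noteq> t \<longrightarrow> (\<exists>s'\<in>D. le s s' \<and> le s' t \<and> s' \<noteq> t \<and> G s' t)"
    proof (intro ballI impI)
      fix t s assume ts: "t \<in> D" "s \<in> D" "le s t \<and> s \<noteq> t"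
      then have "s \<in> sdown T le t" "t \<in> T" using DT by (auto simp: sdown_def)
      then obtain s' where s': "s' \<in> sdown T le t" "le s s'" "s' \<noteq> t" "\<exists>x\<in>Vt s'. \<exists>y\<in>Vt t. E x y"
        using cofT by blast
      have "s' \<in> T" "le s' t" using s' by (auto simp: sdown_def)
      then have "s' \<in> D" using Ddown ts by blast
      then show "\<exists>s'\<in>D. le s s' \<and> le s' t \<and> s' \<noteq> t \<and> G s' t"
        using s' \<open>le s' t\<close> by (auto simp: G_def)
    qed
    show "\<forall>s\<in>D. \<forall>t\<in>D. G s t \<longrightarrow> G t s" unfolding G_def using Esym by blast
    show "\<forall>s\<in>D. \<forall>t\<in>D. s \<noteq> t \<longrightarrow> Q s t \<or> Q t s"
    proof (intro ballI impI)
      fix s t assume "s \<in> D" "t \<in> D" "s \<noteq> t"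
      then have "Vt s \<noteq> Vt t" using injD by (auto simp: inj_on_def)
      then show "Q s t \<or> Q t s" using rtot \<open>s \<in> D\<close> \<open>t \<in> D\<close> by (auto simp: Q_def B_def)
    qed
    show "\<forall>t\<in>D. finite {s\<in>D. Q s t \<and> s \<noteq> t \<and> G t s}"
    proof
      fix t assume tD: "t \<in> D"
      let ?R = "{y. (y, Vt t) \<in> r \<and> y \<noteq> Vt t \<and> F (Vt t) y}"
      have "finite ?R" using r(2) tD by (auto simp: B_def)
      then have fin: "finite (Vt -` ?R \<inter> D)" using injD by (rule finite_vimage_IntI)
      have "{s\<in>D. Q s t \<and> s \<noteq> t \<and> G t s} \<subseteq> Vt -` ?R \<inter> D"
      proof
        fix s assume s: "s \<in> {s\<in>D. Q s t \<and> s \<noteq> t \<and> G t s}"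
        then have "Vt s \<noteq> Vt t" using injD tD by (auto simp: inj_on_def)
        then show "s \<in> Vt -` ?R \<inter> D" using s tD by (auto simp: Q_def G_def F_def B_def)
      qed
      then show "finite {s\<in>D. Q s t \<and> s \<noteq> t \<and> G t s}" using fin finite_subset by blast
    qed
  qed
qed

theorem lemma5p2:
  fixes V :: "'v set" and E :: "'v \<Rightarrow> 'v \<Rightarrow> bool" and U :: "'v set"
    and T :: "'t set" and le :: "'t \<Rightarrow> 't \<Rightarrow> bool" and Vt :: "'t \<Rightarrow> 'v set"
  assumes "connected_graph V E"
    and "U \<subseteq> V"
    and "\<forall>B F. rooted_countable_minor V E U B F \<longrightarrow> countable_colouring_number B F"
    and "normal_semi_partition_tree V E T le Vt"
    and "slim T le Vt"
    and "U_rooted_tree U T Vt"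
  shows "(\<forall>C. branch T le C \<longrightarrow> countable C) \<and> (\<forall>t\<in>T. countable (Vt t))"
proof -
  note nd = assms(4)[unfolded normal_semi_partition_tree_def]
  have ot: "order_tree T le" using nd[THEN conjunct1] .
  note od = ot[unfolded order_tree_def]
  have trans: "\<forall>x\<in>T. \<forall>y\<in>T. \<forall>z\<in>T. le x y \<and> le y z \<longrightarrow> le x z" using od[THEN conjunct2, THEN conjunct2, THEN conjunct1] .
  have dwf0: "\<forall>t\<in>T. (\<forall>x\<in>down T le t. \<forall>y\<in>down T le t. le x y \<or> le y x) \<and>
             (\<forall>S. S \<subseteq> down T le t \<and> S \<noteq> {} \<longrightarrow> (\<exists>m\<in>S. \<forall>s\<in>S. le m s))"
    using od[THEN conjunct2, THEN conjunct2, THEN conjunct2, THEN conjunct2] .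
  have dch: "\<forall>t\<in>T. \<forall>x\<in>down T le t. \<forall>y\<in>down T le t. le x y \<or> le y x"
    using dwf0 by blast
  have cc: "countable C" if "C \<subseteq> T" "\<forall>x\<in>C. \<forall>y\<in>C. le x y \<or> le y x" "\<forall>x\<in>C. \<forall>s\<in>T. le s x \<longrightarrow> s \<in> C" for C
    using chain_countable[OF assms(1) assms(3) assms(4) assms(5) assms(6) that] .
  have part1: "countable C" if br: "branch T le C" for C
  proof -
    have ch: "chain_in T le C" using br by (simp add: branch_def)
    have max: "\<forall>D. chain_in T le D \<and> C \<subseteq> D \<longrightarrow> D = C" using br by (simp add: branch_def)
    have CT: "C \<subseteq> T" and Cch: "\<forall>x\<in>C. \<forall>y\<in>C. le x y \<or> le y x" using ch by (auto simp: chain_in_def)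
    have Cdown: "\<forall>x\<in>C. \<forall>s\<in>T. le s x \<longrightarrow> s \<in> C"
    proof (intro ballI impI)
      fix x s assume xs: "x \<in> C" "s \<in> T" "le s x"
      have xT: "x \<in> T" using xs CT by blast
      have sd: "s \<in> down T le x" using xs by (simp add: down_def)
      have "chain_in T le (insert s C)"
        unfolding chain_in_def
      proof (intro conjI ballI)
        show "insert s C \<subseteq> T" using CT xs by blast
      next
        fix a b assume ab: "a \<in> insert s C" "b \<in> insert s C"
        have comp: "le s y \<or> le y s" if "y \<in> insert s C" for y
        proof (cases "y = s")
          case True
          then show ?thesis using dch xT sd by blast
        next
          case False
          then have yC: "y \<in> C" using that by blast
          then have yT: "y \<in> T" using CT by blast
          show ?thesis
          proof (cases "le y x")
            case True
            then have "y \<in> down T le x" using yT by (simp add: down_def)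
            then show ?thesis using dch xT sd by blast
          next
            case False
            then have "le x y" using Cch xs yC by blast
            then show ?thesis using trans xs xT yT by blast
          qed
        qed
        show "le a b \<or> le b a"
        proof (cases "a = s")
          case True then show ?thesis using comp ab by blast
        next
          case False
          note aC = this
          show ?thesis
          proof (cases "b = s")
            case True then show ?thesis using comp ab by blast
          next
            case False
            then show ?thesis using aC ab Cch by blast
          qed
        qed
      qed
      then have "insert s C = C" using max by blast
      then show "s \<in> C" by blast
    qed
    show ?thesis using cc[OF CT Cch Cdown] .
  qed
  have part2: "countable (Vt t)" if tT: "t \<in> T" for t
  proof -
    have "down T le t \<subseteq> T" by (auto simp: down_def)
    moreover have "\<forall>x\<in>down T le t. \<forall>y\<in>down T le t. le x y \<or> le y x" using dch tT by blast
    moreover have "\<forall>x\<in>down T le t. \<forall>s\<in>T. le s x \<longrightarrow> s \<in> down T le t"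
    proof (intro ballI impI)
      fix x s assume "x \<in> down T le t" "s \<in> T" "le s x"
      then have "x \<in> T" "le x t" by (auto simp: down_def)
      then have "le s t" using trans[rule_format, of s x t] \<open>s \<in> T\<close> \<open>le s x\<close> tT by blast
      then show "s \<in> down T le t" using \<open>s \<in> T\<close> by (simp add: down_def)
    qed
    ultimately have "countable (down T le t)" by (rule cc)
    moreover have "sdown T le t \<subseteq> down T le t" by (auto simp: sdown_def down_def)
    ultimately have "countable (sdown T le t)" using countable_subset by blast
    moreover have "(card_of (Vt t), card_of (sdown T le t <+> (UNIV :: nat set))) \<in> ordLeq"
      using assms(5) tT by (simp add: slim_def)
    ultimately show ?thesis using countable_from_slim by blast
  qed
  show ?thesis using part1 part2 by blast
qed

end
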